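(* Let $n\in\mathbb{N}$ and let $R$ be a $2n$-adically closed ring. If $p,q$ are prime ideals of $R$ (not necessarily distinct), then either $p+q=R$ or $p+q$ is a prime ideal.
   Context: All rings are commutative with $1$; $\mathbb{N}=\{1,2,\dots\}$. A ring $R$ is $k$-adically closed if every monic polynomial of degree $k$ with coefficients in $R$ has a root in $R$. *)

theory Defs
  imports "HOL-Algebra.Algebra"
begin

definition adically_closed :: "nat \<Rightarrow> ('a, 'b) ring_scheme \<Rightarrow> bool" where
  "adically_closed k R \<longleftrightarrow>
     (\<forall>a \<in> {..<k} \<rightarrow> carrier R. \<exists>x \<in> carrier R.
        x [^]\<^bsub>R\<^esub> k \<oplus>\<^bsub>R\<^esub> (\<Oplus>\<^bsub>R\<^esub> i\<in>{..<k}. a i \<otimes>\<^bsub>R\<^esub> x [^]\<^bsub>R\<^esub> i) = \<zero>\<^bsub>R\<^esub>)"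

end

theory Submission
  imports Defs
begin

definition plt :: "('a, 'b) ring_scheme \<Rightarrow> nat \<Rightarrow> ('a \<Rightarrow> 'a) \<Rightarrow> bool" where
  "plt R d h \<longleftrightarrow> (\<exists>a\<in>{..<d} \<rightarrow> carrier R. \<forall>x\<in>carrier R.
      h x = (\<Oplus>\<^bsub>R\<^esub> i\<in>{..<d}. a i \<otimes>\<^bsub>R\<^esub> x [^]\<^bsub>R\<^esub> i))"

context cring
begin

lemma fc_mem[simp, intro]: "a \<in> A \<rightarrow> carrier R \<Longrightarrow> i \<in> A \<Longrightarrow> a i \<in> carrier R"
  by blast

lemma plt_closed: "plt R d h \<Longrightarrow> x \<in> carrier R \<Longrightarrow> h x \<in> carrier R"
  unfolding plt_def by (auto intro!: finsum_closed)

lemma plt_add: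
  assumes "plt R d h1" "plt R d h2"
  shows "plt R d (\<lambda>x. h1 x \<oplus> h2 x)"
proof -
  obtain a1 where a1: "a1 \<in> {..<d} \<rightarrow> carrier R"
    "\<forall>x\<in>carrier R. h1 x = (\<Oplus>i\<in>{..<d}. a1 i \<otimes> x [^] i)"
    using assms(1) unfolding plt_def by blast
  obtain a2 where a2: "a2 \<in> {..<d} \<rightarrow> carrier R"
    "\<forall>x\<in>carrier R. h2 x = (\<Oplus>i\<in>{..<d}. a2 i \<otimes> x [^] i)"
    using assms(2) unfolding plt_def by blast
  show ?thesis unfolding plt_def
  proof (intro bexI[of _ "\<lambda>i. a1 i \<oplus> a2 i"] ballI)
    fix x assume x: "x \<in> carrier R"
    have "(\<Oplus>i\<in>{..<d}. (a1 i \<oplus> a2 i) \<otimes> x [^] i)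
        = (\<Oplus>i\<in>{..<d}. a1 i \<otimes> x [^] i \<oplus> a2 i \<otimes> x [^] i)"
      using a1(1) a2(1) x by (intro finsum_cong') (auto intro: l_distr)
    also have "\<dots> = h1 x \<oplus> h2 x"
      using a1 a2 x by (subst finsum_addf) auto
    finally show "h1 x \<oplus> h2 x = (\<Oplus>i\<in>{..<d}. (a1 i \<oplus> a2 i) \<otimes> x [^] i)" by simp
  qed (use a1(1) a2(1) in auto)
qed

lemma plt_smult:
  assumes "plt R d h" "c \<in> carrier R"
  shows "plt R d (\<lambda>x. h x \<otimes> c)"
proof -
  obtain a where a: "a \<in> {..<d} \<rightarrow> carrier R"
    "\<forall>x\<in>carrier R. h x = (\<Oplus>i\<in>{..<d}. a i \<otimes> x [^] i)"
    using assms(1) unfolding plt_def by blast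
  show ?thesis unfolding plt_def
  proof (intro bexI[of _ "\<lambda>i. a i \<otimes> c"] ballI)
    fix x assume x: "x \<in> carrier R"
    have "h x \<otimes> c = (\<Oplus>i\<in>{..<d}. a i \<otimes> x [^] i \<otimes> c)"
      using a x assms(2) by (simp add: finsum_ldistr)
    also have "\<dots> = (\<Oplus>i\<in>{..<d}. a i \<otimes> c \<otimes> x [^] i)"
      using a x assms(2) by (intro finsum_cong') (auto simp: m_ac)
    finally show "h x \<otimes> c = (\<Oplus>i\<in>{..<d}. a i \<otimes> c \<otimes> x [^] i)" .
  qed (use a(1) assms(2) in auto)
qed

lemma plt_top:
  assumes "plt R d h"
  shows "plt R (Suc d) (\<lambda>x. x [^] d \<oplus> h x)"
proof -
  obtain a where a: "a \<in> {..<d} \<rightarrow> carrier R"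
    "\<forall>x\<in>carrier R. h x = (\<Oplus>i\<in>{..<d}. a i \<otimes> x [^] i)"
    using assms(1) unfolding plt_def by blast
  show ?thesis unfolding plt_def
  proof (intro bexI[of _ "a(d := \<one>)"] ballI)
    fix x assume x: "x \<in> carrier R"
    have "(\<Oplus>i\<in>{..<Suc d}. (a(d := \<one>)) i \<otimes> x [^] i)
        = (a(d := \<one>)) d \<otimes> x [^] d \<oplus> (\<Oplus>i\<in>{..<d}. (a(d := \<one>)) i \<otimes> x [^] i)"
      using a x by (subst lessThan_Suc, subst finsum_insert) auto
    also have "(\<Oplus>i\<in>{..<d}. (a(d := \<one>)) i \<otimes> x [^] i) = (\<Oplus>i\<in>{..<d}. a i \<otimes> x [^] i)"
      using a x by (intro finsum_cong') auto
    finally show "x [^] d \<oplus> h x = (\<Oplus>i\<in>{..<Suc d}. (a(d := \<one>)) i \<otimes> x [^] i)"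
      using a x by simp
  qed (use a(1) in auto)
qed

lemma plt_mono:
  assumes "plt R d h"
  shows "plt R (Suc d) h"
proof -
  obtain a where a: "a \<in> {..<d} \<rightarrow> carrier R"
    "\<forall>x\<in>carrier R. h x = (\<Oplus>i\<in>{..<d}. a i \<otimes> x [^] i)"
    using assms(1) unfolding plt_def by blast
  show ?thesis unfolding plt_def
  proof (intro bexI[of _ "a(d := \<zero>)"] ballI)
    fix x assume x: "x \<in> carrier R"
    have "(\<Oplus>i\<in>{..<Suc d}. (a(d := \<zero>)) i \<otimes> x [^] i)
        = (a(d := \<zero>)) d \<otimes> x [^] d \<oplus> (\<Oplus>i\<in>{..<d}. (a(d := \<zero>)) i \<otimes> x [^] i)"
      using a x by (subst lessThan_Suc, subst finsum_insert) auto
    also have "(\<Oplus>i\<in>{..<d}. (a(d := \<zero>)) i \<otimes> x [^] i) = (\<Oplus>i\<in>{..<d}. a i \<otimes> x [^] i)"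
      using a x by (intro finsum_cong') auto
    finally show "h x = (\<Oplus>i\<in>{..<Suc d}. (a(d := \<zero>)) i \<otimes> x [^] i)"
      using a x by (simp add: finsum_closed)
  qed (use a(1) in auto)
qed

lemma plt_shift:
  assumes "plt R d h"
  shows "plt R (Suc d) (\<lambda>x. h x \<otimes> x)"
proof (cases d)
  case 0
  then show ?thesis using assms unfolding plt_def
    by (intro bexI[of _ "\<lambda>i. \<zero>"]) auto
next
  case (Suc m)
  obtain a where a: "a \<in> {..<d} \<rightarrow> carrier R"
    "\<forall>x\<in>carrier R. h x = (\<Oplus>i\<in>{..<d}. a i \<otimes> x [^] i)"
    using assms(1) unfolding plt_def by blast
  define b where "b = (\<lambda>i. if i = 0 then \<zero> else a (i - 1))"
  have b: "b \<in> {..<Suc d} \<rightarrow> carrier R" using a(1) by (auto simp: b_def)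
  show ?thesis unfolding plt_def
  proof (intro bexI[of _ b] ballI)
    fix x assume x: "x \<in> carrier R"
    have "(\<Oplus>i\<in>{..<Suc d}. b i \<otimes> x [^] i) = (\<Oplus>i\<in>{..Suc m}. b i \<otimes> x [^] i)"
      using Suc by (simp add: lessThan_Suc_atMost)
    also have "\<dots> = (\<Oplus>i\<in>{..m}. b (Suc i) \<otimes> x [^] Suc i) \<oplus> b 0 \<otimes> x [^] (0::nat)"
      using b x Suc by (subst finsum_Suc2) (auto simp: lessThan_Suc_atMost[symmetric])
    also have "\<dots> = (\<Oplus>i\<in>{..m}. b (Suc i) \<otimes> x [^] Suc i)"
    proof -
      have cl: "(\<Oplus>i\<in>{..m}. b (Suc i) \<otimes> x [^] Suc i) \<in> carrier R"
        using b x Suc by (intro finsum_closed) (auto simp: Pi_iff)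
      have "b 0 = \<zero>" by (simp add: b_def)
      then show ?thesis using cl x by simp
    qed
    also have "\<dots> = (\<Oplus>i\<in>{..<d}. a i \<otimes> x [^] i \<otimes> x)"
      using a x Suc by (intro finsum_cong') (auto simp: b_def m_assoc lessThan_Suc_atMost[symmetric])
    also have "\<dots> = h x \<otimes> x"
      using a x by (simp add: finsum_ldistr)
    finally show "h x \<otimes> x = (\<Oplus>i\<in>{..<Suc d}. b i \<otimes> x [^] i)" by simp
  qed (use b in auto)
qed

lemma monic_power:
  assumes s: "s \<in> carrier R" and t: "t \<in> carrier R"
  shows "\<exists>h. plt R (2 * k) h \<and> (\<forall>x\<in>carrier R.
           (x \<otimes> x \<oplus> (s \<otimes> x \<oplus> t)) [^] k = x [^] (2 * k) \<oplus> h x)"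
proof (induction k)
  case 0
  then show ?case unfolding plt_def by (intro exI[of _ "\<lambda>x. \<zero>"]) auto
next
  case (Suc k)
  then obtain h where h: "plt R (2 * k) h" and
    e: "\<forall>x\<in>carrier R. (x \<otimes> x \<oplus> (s \<otimes> x \<oplus> t)) [^] k = x [^] (2 * k) \<oplus> h x" by blast
  define g where "g = (\<lambda>x. h x \<otimes> x \<otimes> x \<oplus>
     ((x [^] (2 * k) \<oplus> h x) \<otimes> x \<otimes> s \<oplus> (x [^] (2 * k) \<oplus> h x) \<otimes> t))"
  have p1: "plt R (Suc (Suc (2 * k))) (\<lambda>x. h x \<otimes> x \<otimes> x)"
    by (intro plt_shift h)
  have p2: "plt R (Suc (Suc (2 * k))) (\<lambda>x. (x [^] (2 * k) \<oplus> h x) \<otimes> x \<otimes> s)"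
    by (intro plt_smult plt_shift plt_top h s)
  have p3: "plt R (Suc (Suc (2 * k))) (\<lambda>x. (x [^] (2 * k) \<oplus> h x) \<otimes> t)"
    by (intro plt_smult plt_mono plt_top h t)
  have "plt R (2 * Suc k) g" unfolding g_def
    using plt_add[OF p1 plt_add[OF p2 p3]] by simp
  moreover have "\<forall>x\<in>carrier R.
     (x \<otimes> x \<oplus> (s \<otimes> x \<oplus> t)) [^] Suc k = x [^] (2 * Suc k) \<oplus> g x"
  proof
    fix x assume x: "x \<in> carrier R"
    have hx: "h x \<in> carrier R" using plt_closed[OF h x] .
    have "(x \<otimes> x \<oplus> (s \<otimes> x \<oplus> t)) [^] Suc k
        = (x [^] (2 * k) \<oplus> h x) \<otimes> (x \<otimes> x \<oplus> (s \<otimes> x \<oplus> t))"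
      using e x by simp
    also have "x [^] (2 * Suc k) = x [^] (2 * k) \<otimes> x \<otimes> x"
      using x by (simp add: nat_pow_Suc)
    moreover have "(x [^] (2 * k) \<oplus> h x) \<otimes> (x \<otimes> x \<oplus> (s \<otimes> x \<oplus> t))
        = x [^] (2 * k) \<otimes> x \<otimes> x \<oplus> g x"
      unfolding g_def using x hx s t nat_pow_closed[OF x, of "2*k"] by algebra
    ultimately show "(x \<otimes> x \<oplus> (s \<otimes> x \<oplus> t)) [^] Suc k = x [^] (2 * Suc k) \<oplus> g x"
      by simp
  qed
  ultimately show ?case by blast
qed

end

lemma prime_pow:
  fixes R (structure)
  assumes "primeideal I R" "x \<in> carrier R" "x [^] (k::nat) \<in> I"
  shows "x \<in> I"
  using assms(3)
proof (induction k)
  case 0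
  interpret primeideal I R by fact
  from 0 have "\<one> \<in> I" by simp
  then have "\<one> \<otimes> x \<in> I" using assms(2) by (rule I_r_closed)
  then show ?case using assms(2) by simp
next
  case (Suc k)
  interpret primeideal I R by fact
  have "x [^] k \<otimes> x \<in> I" using Suc.prems by (simp add: nat_pow_Suc)
  then have "x [^] k \<in> I \<or> x \<in> I" using assms(2) by (intro I_prime) auto
  then show ?case using Suc.IH by blast
qed

theorem mainTheorem3:
  fixes R (structure) and n :: nat and P Q :: "'a set"
  assumes "cring R"
    and "n \<ge> 1"
    and "adically_closed (2 * n) R"
    and "primeideal P R"
    and "primeideal Q R"
  shows "P <+>\<^bsub>R\<^esub> Q = carrier R \<or> primeideal (P <+>\<^bsub>R\<^esub> Q) R"
proof (cases "P <+> Q = carrier R")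
  case True then show ?thesis by simp
next
  case False
  interpret cring R by fact
  interpret P: primeideal P R by fact
  interpret Q: primeideal Q R by fact
  have idl: "ideal (P <+> Q) R"
    by (intro add_ideals P.is_ideal Q.is_ideal)
  have mem: "p \<oplus> q \<in> P <+> Q" if "p \<in> P" "q \<in> Q" for p q
    using that unfolding set_add_def' by blast
  show ?thesis
  proof (rule disjI2, rule primeidealI[OF idl \<open>cring R\<close>])
    show "carrier R \<noteq> P <+> Q" using False by simp
  next
    fix a b assume a: "a \<in> carrier R" and b: "b \<in> carrier R" and ab: "a \<otimes> b \<in> P <+> Q"
    then obtain p q where p: "p \<in> P" and q: "q \<in> Q" and pq: "a \<otimes> b = p \<oplus> q"
      unfolding set_add_def' by blast
    have pc: "p \<in> carrier R" using p P.a_subset by blast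
    have qc: "q \<in> carrier R" using q Q.a_subset by blast
    define s where "s = \<ominus> (a \<oplus> b)"
    have sc: "s \<in> carrier R" using a b by (simp add: s_def)
    obtain h where h: "plt R (2 * n) h" and
      e: "\<forall>x\<in>carrier R. (x \<otimes> x \<oplus> (s \<otimes> x \<oplus> q)) [^] n = x [^] (2 * n) \<oplus> h x"
      using monic_power[OF sc qc] by blast
    obtain c where c: "c \<in> {..<2*n} \<rightarrow> carrier R"
      "\<forall>x\<in>carrier R. h x = (\<Oplus>i\<in>{..<2*n}. c i \<otimes> x [^] i)"
      using h unfolding plt_def by blast
    obtain x where x: "x \<in> carrier R"
      and root: "x [^] (2 * n) \<oplus> (\<Oplus>i\<in>{..<2*n}. c i \<otimes> x [^] i) = \<zero>"
      using assms(3) c(1) unfolding adically_closed_def by blast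
    define f where "f = x \<otimes> x \<oplus> (s \<otimes> x \<oplus> q)"
    have fc: "f \<in> carrier R" using x sc qc by (simp add: f_def)
    have "f [^] n = \<zero>" using e c(2) x root by (simp add: f_def)
    then have "f [^] n \<in> P" "f [^] n \<in> Q"
      using P.additive_subgroup_axioms Q.additive_subgroup_axioms
      by (auto simp: additive_subgroup.zero_closed)
    then have fP: "f \<in> P" and fQ: "f \<in> Q"
      using prime_pow[OF assms(4) fc] prime_pow[OF assms(5) fc] by auto
    have "(x \<ominus> a) \<otimes> (x \<ominus> b) = f \<oplus> p"
      unfolding f_def s_def using a b x pc qc pq by algebra
    moreover have "f \<oplus> p \<in> P" using fP p by (simp add: P.a_closed)
    ultimately have P1: "x \<ominus> a \<in> P \<or> x \<ominus> b \<in> P"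
      using a b x by (intro P.I_prime) auto
    have "x \<otimes> (x \<ominus> (a \<oplus> b)) = f \<oplus> \<ominus> q"
      unfolding f_def s_def using a b x pc qc by algebra
    moreover have "f \<oplus> \<ominus> q \<in> Q" using fQ q by (simp add: Q.a_closed Q.a_inv_closed)
    ultimately have Q1: "x \<in> Q \<or> x \<ominus> (a \<oplus> b) \<in> Q"
      using a b x by (intro Q.I_prime) auto
    show "a \<in> P <+> Q \<or> b \<in> P <+> Q"
    proof -
      { assume 1: "x \<ominus> a \<in> P" and 2: "x \<in> Q"
        have "a = \<ominus> (x \<ominus> a) \<oplus> x" using a x by algebra
        then have "a \<in> P <+> Q" using mem[OF P.a_inv_closed[OF 1] 2] by simp }
      moreover
      { assume 1: "x \<ominus> b \<in> P" and 2: "x \<in> Q"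
        have "b = \<ominus> (x \<ominus> b) \<oplus> x" using b x by algebra
        then have "b \<in> P <+> Q" using mem[OF P.a_inv_closed[OF 1] 2] by simp }
      moreover
      { assume 1: "x \<ominus> a \<in> P" and 2: "x \<ominus> (a \<oplus> b) \<in> Q"
        have "b = (x \<ominus> a) \<oplus> \<ominus> (x \<ominus> (a \<oplus> b))" using a b x by algebra
        then have "b \<in> P <+> Q" using mem[OF 1 Q.a_inv_closed[OF 2]] by simp }
      moreover
      { assume 1: "x \<ominus> b \<in> P" and 2: "x \<ominus> (a \<oplus> b) \<in> Q"
        have "a = (x \<ominus> b) \<oplus> \<ominus> (x \<ominus> (a \<oplus> b))" using a b x by algebra
        then have "a \<in> P <+> Q" using mem[OF 1 Q.a_inv_closed[OF 2]] by simp }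
      ultimately show ?thesis using P1 Q1 by blast
    qed
  qed
qed

end
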